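(* Let $F(z,t)=\sum_{n\ge1}\sum_{m\ge0}a_{n,m}z^nt^m$ be very nice and let $\Theta=(\Theta_1,\ldots,\Theta_r)$ be a (possibly empty) sequence of the operators $\mathcal E,\mathcal N$ containing no two consecutive $\mathcal N$'s. Then $(\Theta F)(z,1)$ is a rational function of $z$, where $\Theta F=\Theta_r\circ\cdots\circ\Theta_1F$.
   Context: A bivariate series $F(z,t)$ is nice if $F(z,z^k)$ is a rational function of $z$ for every integer $k\ge0$; it is very nice if it is nice and $F(z,0)$ is also rational. For $G(z,t)=\sum_{n\ge1}\sum_{m\ge0}a_{n,m}z^nt^m$: $\mathcal E G(z,t)=\frac{G(z,1)-ztG(z,zt)}{1-zt}$ and $\mathcal N G(z,t)=G(z,0)+\sum_{n\ge1}\sum_{m\ge1}a_{n,m}\frac{1}{1-z^m}\cdot\frac{1-(tz)^m}{1-tz}z^n$. *)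

theory Defs
  imports "HOL-Computational_Algebra.Computational_Algebra"
begin

text \<open>A bivariate series F(z,t) = sum a_{n,m} z^n t^m in which every z-coefficient is a
  polynomial in t is represented as a power series in z with coefficients in 'a poly:
  F $ n is the polynomial sum_m a_{n,m} t^m.\<close>

type_synonym 'a bivar = "'a poly fps"

definition bcoeff :: "'a::zero bivar \<Rightarrow> nat \<Rightarrow> nat \<Rightarrow> 'a" where
  "bcoeff F n m = coeff (F $ n) m"

definition eval_t :: "'a::comm_semiring_1 \<Rightarrow> 'a bivar \<Rightarrow> 'a fps" where
  "eval_t c F = Abs_fps (\<lambda>n. poly (F $ n) c)"

text \<open>F(z,z^k): the coefficient of z^N is the sum of a_{n,m} over n + k*m = N.\<close>
definition subst_zk :: "nat \<Rightarrow> 'a::comm_semiring_1 bivar \<Rightarrow> 'a fps" where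
  "subst_zk k F = Abs_fps (\<lambda>N. \<Sum>n\<le>N. \<Sum>m\<le>degree (F $ n).
      if n + k * m = N then bcoeff F n m else 0)"

definition rational_fps :: "'a::field fps \<Rightarrow> bool" where
  "rational_fps f \<longleftrightarrow> (\<exists>p q :: 'a poly. q \<noteq> 0 \<and> fps_of_poly q * f = fps_of_poly p)"

definition nice :: "'a::field bivar \<Rightarrow> bool" where
  "nice F \<longleftrightarrow> (\<forall>k. rational_fps (subst_zk k F))"

definition very_nice :: "'a::field bivar \<Rightarrow> bool" where
  "very_nice F \<longleftrightarrow> nice F \<and> rational_fps (eval_t 0 F)"

text \<open>Operator E: (G(z,1) - z t G(z,zt)) / (1 - zt), with 1/(1-zt) = sum_i z^i t^i.\<close>
definition geom_zt :: "'a::comm_ring_1 bivar" where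
  "geom_zt = Abs_fps (\<lambda>i. monom 1 i)"

definition const_t :: "'a::comm_ring_1 fps \<Rightarrow> 'a bivar" where
  "const_t f = Abs_fps (\<lambda>n. [:f $ n:])"

text \<open>G(z,zt): coefficient of z^N t^m is a_{N-m,m}.\<close>
definition subst_zt :: "'a::comm_ring_1 bivar \<Rightarrow> 'a bivar" where
  "subst_zt G = Abs_fps (\<lambda>N. \<Sum>n\<le>N. monom (bcoeff G n (N - n)) (N - n))"

definition opE :: "'a::comm_ring_1 bivar \<Rightarrow> 'a bivar" where
  "opE G = (const_t (eval_t 1 G) - fps_X * fps_const [:0, 1:] * subst_zt G) * geom_zt"

text \<open>Operator N: G(z,0) + sum_{n>=1, m>=1} a_{n,m} z^n (1/(1-z^m)) (1-(tz)^m)/(1-tz),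
  expanded with 1/(1-z^m) = sum_i z^{m i} and (1-(tz)^m)/(1-tz) = sum_{j<m} t^j z^j,
  so that the coefficient of z^N collects a_{n,m} t^j over n + m*i + j = N, j < m.\<close>
definition opN :: "'a::comm_ring_1 bivar \<Rightarrow> 'a bivar" where
  "opN G = Abs_fps (\<lambda>N. [:bcoeff G N 0:] +
     (\<Sum>n\<in>{1..N}. \<Sum>m\<in>{1..degree (G $ n)}. \<Sum>i\<le>N. \<Sum>j<m.
        if n + m * i + j = N then monom (bcoeff G n m) j else 0))"

datatype op = E | N

fun apply_op :: "op \<Rightarrow> 'a::comm_ring_1 bivar \<Rightarrow> 'a bivar" where
  "apply_op E G = opE G"
| "apply_op N G = opN G"

definition apply_ops :: "op list \<Rightarrow> 'a::comm_ring_1 bivar \<Rightarrow> 'a bivar" where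
  "apply_ops \<Theta> F = foldl (\<lambda>G \<theta>. apply_op \<theta> G) F \<Theta>"

definition no_consecutive_N :: "op list \<Rightarrow> bool" where
  "no_consecutive_N \<Theta> \<longleftrightarrow> (\<forall>i. Suc i < length \<Theta> \<longrightarrow> \<not> (\<Theta> ! i = N \<and> \<Theta> ! Suc i = N))"

end

theory Submission
  imports Defs
begin

lemma subst_zk_S:
  fixes G :: "'a::comm_semiring_1 bivar"
  assumes S: "finite S" and Z: "\<And>n m. n + k*m = M \<Longrightarrow> (n,m) \<notin> S \<Longrightarrow> bcoeff G n m = 0"
  shows "subst_zk k G $ M = (\<Sum>(n,m)\<in>S. if n + k*m = M then bcoeff G n m else 0)"
proof -
  define g where "g = (\<lambda>(n,m). if n + k*m = M then bcoeff G n m else (0::'a))"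
  define A where "A = Sigma {..M} (\<lambda>n. {..degree (G$n)})"
  have fA: "finite A" unfolding A_def by auto
  have "subst_zk k G $ M = sum g A"
    unfolding subst_zk_def A_def g_def by (simp add: sum.Sigma)
  also have "\<dots> = sum g (A - {x. g x = 0})" using fA by (simp add: sum.setdiff_irrelevant)
  also have "A - {x. g x = 0} = S - {x. g x = 0}"
  proof (intro set_eqI iffI)
    fix p assume "p \<in> A - {x. g x = 0}"
    then obtain n m where p: "p = (n,m)" "n + k*m = M" "bcoeff G n m \<noteq> 0"
      by (cases p) (auto simp: g_def split: if_splits)
    then show "p \<in> S - {x. g x = 0}" using Z[of n m] \<open>p \<in> A - _\<close> by auto
  next
    fix p assume "p \<in> S - {x. g x = 0}"
    then obtain n m where p: "p = (n,m)" "n + k*m = M" "bcoeff G n m \<noteq> 0"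
      by (cases p) (auto simp: g_def split: if_splits)
    then have "m \<le> degree (G$n)" by (simp add: bcoeff_def le_degree)
    moreover have "n \<le> M" using p by simp
    ultimately show "p \<in> A - {x. g x = 0}" using p \<open>p \<in> S - _\<close> by (auto simp: A_def)
  qed
  also have "sum g (S - {x. g x = 0}) = sum g S" using S by (simp add: sum.setdiff_irrelevant)
  finally show ?thesis by (simp add: g_def)
qed

lemma subst_zk_D:
  fixes G :: "'a::comm_semiring_1 bivar"
  assumes "\<And>n. n \<le> M \<Longrightarrow> degree (G$n) \<le> D"
  shows "subst_zk k G $ M = (\<Sum>n\<le>M. \<Sum>m\<le>D. if n + k*m = M then bcoeff G n m else 0)"
proof -
  have "subst_zk k G $ M = (\<Sum>(n,m)\<in>{..M}\<times>{..D}. if n + k*m = M then bcoeff G n m else 0)"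
  proof (rule subst_zk_S)
    fix n m assume "n + k*m = M" "(n,m) \<notin> {..M}\<times>{..D}"
    then have "m > degree (G$n)" using assms[of n] by auto
    then show "bcoeff G n m = 0" by (simp add: bcoeff_def coeff_eq_0)
  qed simp
  then show ?thesis by (simp add: sum.cartesian_product)
qed

lemma rat_add:
  fixes f g :: "'a::field fps"
  assumes "rational_fps f" "rational_fps g" shows "rational_fps (f + g)"
proof -
  obtain p1 q1 where 1: "q1 \<noteq> 0" "fps_of_poly q1 * f = fps_of_poly p1" using assms(1) unfolding rational_fps_def by blast
  obtain p2 q2 where 2: "q2 \<noteq> 0" "fps_of_poly q2 * g = fps_of_poly p2" using assms(2) unfolding rational_fps_def by blast
  have "fps_of_poly (q1*q2) * (f+g) = fps_of_poly (q2*p1 + q1*p2)"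
    using 1 2 by (simp add: fps_of_poly_mult fps_of_poly_add algebra_simps)
  then show ?thesis unfolding rational_fps_def using 1 2 by (metis mult_eq_0_iff)
qed

lemma rat_poly_mult:
  fixes f :: "'a::field fps"
  assumes "rational_fps f" shows "rational_fps (fps_of_poly r * f)"
proof -
  obtain p1 q1 where 1: "q1 \<noteq> 0" "fps_of_poly q1 * f = fps_of_poly p1" using assms(1) unfolding rational_fps_def by blast
  have "fps_of_poly q1 * (fps_of_poly r * f) = fps_of_poly (r * p1)"
    using 1 by (simp add: fps_of_poly_mult)
  then show ?thesis unfolding rational_fps_def using 1 by blast
qed

lemma rat_uminus:
  fixes f :: "'a::field fps"
  assumes "rational_fps f" shows "rational_fps (- f)"
  using rat_poly_mult[OF assms, of "-1"] by (simp add: fps_of_poly_uminus)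

lemma rat_diff:
  fixes f g :: "'a::field fps"
  assumes "rational_fps f" "rational_fps g" shows "rational_fps (f - g)"
  using rat_add[OF assms(1) rat_uminus[OF assms(2)]] by simp

lemma rat_cancel:
  fixes f :: "'a::field fps"
  assumes "rational_fps (fps_of_poly r * f)" "r \<noteq> 0" shows "rational_fps f"
proof -
  obtain p1 q1 where 1: "q1 \<noteq> 0" "fps_of_poly q1 * (fps_of_poly r * f) = fps_of_poly p1" using assms(1) unfolding rational_fps_def by blast
  have "fps_of_poly (q1 * r) * f = fps_of_poly p1" using 1 by (simp add: fps_of_poly_mult mult.assoc)
  then show ?thesis unfolding rational_fps_def using 1 assms(2) by (metis mult_eq_0_iff)
qed

lemma rat_zero: "rational_fps (0::'a::field fps)"
  unfolding rational_fps_def by (rule exI[of _ 0], rule exI[of _ 1]) simp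

lemma rat_sum:
  fixes f :: "nat \<Rightarrow> 'a::field fps"
  assumes "\<And>i. i \<in> A \<Longrightarrow> rational_fps (f i)" shows "rational_fps (sum f A)"
  using assms by (induction A rule: infinite_finite_induct) (auto simp: rat_zero intro: rat_add)

lemma rat_Xpow:
  fixes f :: "'a::field fps"
  assumes "rational_fps f" shows "rational_fps (fps_X^j * f)"
  using rat_poly_mult[OF assms, of "monom 1 j"] by (simp add: fps_of_poly_monom')

lemma one_minus_Xpow: "(1 - fps_X^Suc j :: 'a::field fps) = fps_of_poly (1 - monom 1 (Suc j))"
  by (simp add: fps_of_poly_diff fps_of_poly_monom')

lemma one_minus_monom_nz: "(1 - monom 1 (Suc j) :: 'a::field poly) \<noteq> 0"
proof
  assume "1 - monom 1 (Suc j) = (0::'a poly)"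
  then have "coeff (1 - monom 1 (Suc j)) 0 = (0::'a)" by simp
  then show False by (simp add: coeff_monom)
qed

lemma rat_cancel_X:
  fixes f :: "'a::field fps"
  assumes "rational_fps ((1 - fps_X^Suc j) * f)" shows "rational_fps f"
  using rat_cancel[of "1 - monom 1 (Suc j)" f] assms one_minus_Xpow one_minus_monom_nz by metis

lemma sum_delta_gen: "finite A \<Longrightarrow> (\<Sum>x\<in>A. (\<Sum>y\<in>B x. if x = a then f x y else 0)) = (if a \<in> A then (\<Sum>y\<in>B a. f a y) else 0)"
proof -
  assume "finite A"
  have "(\<Sum>x\<in>A. (\<Sum>y\<in>B x. if x = a then f x y else 0)) = (\<Sum>x\<in>A. if x = a then (\<Sum>y\<in>B x. f x y) else 0)"
    by (rule sum.cong) auto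
  then show ?thesis using \<open>finite A\<close> by (simp add: sum.delta')
qed

lemma eval_t1_subst0: "eval_t 1 G = subst_zk 0 (G :: 'a::comm_semiring_1 bivar)"
  by (rule fps_ext) (simp add: eval_t_def subst_zk_def bcoeff_def poly_altdef sum_delta_gen)

lemma const_t_nth[simp]: "const_t f $ n = [:f $ n:]"
  unfolding const_t_def by simp

lemma "degree (const_t (f::'a::comm_ring_1 fps) $ n) = 0" by simp
lemma subst_zk_const_t: "subst_zk k (const_t f) = (f :: 'a::comm_ring_1 fps)"
proof (rule fps_ext)
  fix n
  have "subst_zk k (const_t f) $ n = (\<Sum>na\<le>n. if na = n then f $ na else 0)"
    unfolding subst_zk_def fps_nth_Abs_fps
  proof (rule sum.cong)
    fix na assume "na \<in> {..n}"
    show "(\<Sum>m\<le>degree (const_t f $ na). if na + k * m = n then bcoeff (const_t f) na m else 0) = (if na = n then f $ na else 0)"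
      by (simp add: bcoeff_def)
  qed simp
  then show "subst_zk k (const_t f) $ n = f $ n" by simp
qed

lemma eval_t_add: "eval_t c (F + G) = eval_t c F + (eval_t c G :: 'a::comm_semiring_1 fps)"
  by (rule fps_ext) (simp add: eval_t_def)

lemma eval_t_diff: "eval_t c (F - G) = eval_t c F - (eval_t c G :: 'a::comm_ring_1 fps)"
  by (rule fps_ext) (simp add: eval_t_def)

lemma eval_t_sum: "eval_t c (sum F A) = (\<Sum>i\<in>A. eval_t c (F i) :: 'a::comm_semiring_1 fps)"
  by (induction A rule: infinite_finite_induct) (auto simp: eval_t_add, auto simp: eval_t_def fps_ext)

lemma deg_bound2:
  fixes G H :: "'a::zero bivar"
  shows "\<exists>D. \<forall>n\<le>M. degree (G$n) \<le> D \<and> degree (H$n) \<le> D"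
proof (intro exI allI impI conjI)
  fix n assume "n \<le> M"
  then show "degree (G$n) \<le> (\<Sum>n\<le>M. degree (G$n) + degree (H$n))"
    by (intro order.trans[OF _ member_le_sum[of n]]) auto
  show "degree (H$n) \<le> (\<Sum>n\<le>M. degree (G$n) + degree (H$n))"
    using \<open>n \<le> M\<close> by (intro order.trans[OF _ member_le_sum[of n]]) auto
qed

lemma subst_zk_diff:
  fixes G H :: "'a::comm_ring_1 bivar"
  shows "subst_zk k (G - H) = subst_zk k G - subst_zk k H"
proof (rule fps_ext)
  fix M
  obtain D where D: "\<And>n. n \<le> M \<Longrightarrow> degree (G$n) \<le> D \<and> degree (H$n) \<le> D"
    using deg_bound2[of M G H] by blast
  have D3: "degree ((G-H)$n) \<le> D" if "n \<le> M" for n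
  proof -
    have "degree ((G-H)$n) \<le> max (degree (G$n)) (degree (H$n))"
      using degree_diff_le_max[of "G$n" "H$n"] by simp
    then show ?thesis using D[OF that] by linarith
  qed
  have "subst_zk k (G - H) $ M = (\<Sum>n\<le>M. \<Sum>m\<le>D. (if n + k*m = M then bcoeff G n m else 0) - (if n + k*m = M then bcoeff H n m else 0))"
    by (simp add: subst_zk_D[of M "G-H" D, OF D3]) (intro sum.cong refl, simp add: bcoeff_def)
  also have "\<dots> = subst_zk k G $ M - subst_zk k H $ M"
    by (simp add: subst_zk_D[of M G D] subst_zk_D[of M H D] D sum_subtractf)
  finally show "subst_zk k (G - H) $ M = (subst_zk k G - subst_zk k H) $ M" by simp
qed

lemma subst_zk_add:
  fixes G H :: "'a::comm_ring_1 bivar"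
  shows "subst_zk k (G + H) = subst_zk k G + subst_zk k H"
  using subst_zk_diff[of k "G + H" H] by (simp add: algebra_simps)

definition Wsh :: "'a::comm_ring_1 bivar \<Rightarrow> 'a bivar" where
  "Wsh H = fps_X * fps_const [:0,1:] * H"

lemma Wsh_nth: "Wsh H $ n = (if n = 0 then 0 else [:0,1:] * H $ (n-1))"
  unfolding Wsh_def by (simp add: mult.assoc fps_X_mult_nth)

lemma bcoeff_Wsh: "bcoeff (Wsh H) n m = (if n = 0 \<or> m = 0 then 0 else bcoeff H (n-1) (m-1))"
  by (cases m) (auto simp: bcoeff_def Wsh_nth coeff_pCons)

lemma subst_zk_Wsh:
  fixes H :: "'a::comm_ring_1 bivar"
  shows "subst_zk k (Wsh H) = fps_X^(Suc k) * subst_zk k H"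
proof (rule fps_ext)
  fix M
  show "subst_zk k (Wsh H) $ M = (fps_X^(Suc k) * subst_zk k H) $ M"
  proof (cases "M < Suc k")
    case True
    have "subst_zk k (Wsh H) $ M = (\<Sum>(n,m)\<in>{}. if n + k*m = M then bcoeff (Wsh H) n m else 0)"
    proof (rule subst_zk_S)
      fix n m assume "n + k*m = M" "(n,m) \<notin> ({}::(nat\<times>nat) set)"
      show "bcoeff (Wsh H) n m = 0"
      proof (cases "n = 0 \<or> m = 0")
        case False
        then have "n + k*m \<ge> Suc k" by (cases m) auto
        then show ?thesis using True \<open>n + k*m = M\<close> by simp
      qed (auto simp: bcoeff_Wsh)
    qed simp
    then show ?thesis using True by (simp add: fps_X_power_mult_nth del: power_Suc)
  next
    case False
    define M' where "M' = M - Suc k"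
    obtain D where D: "\<And>n. n \<le> M' \<Longrightarrow> degree (H$n) \<le> D"
      using deg_bound2[of M' H H] by blast
    let ?S = "(\<lambda>(n,m). (Suc n, Suc m)) ` ({..M'}\<times>{..D})"
    have "subst_zk k (Wsh H) $ M = (\<Sum>(n,m)\<in>?S. if n + k*m = M then bcoeff (Wsh H) n m else 0)"
    proof (rule subst_zk_S)
      fix n m assume nm: "n + k*m = M" "(n,m) \<notin> ?S"
      show "bcoeff (Wsh H) n m = 0"
      proof (cases "n = 0 \<or> m = 0")
        case F: False
        then obtain a b where ab: "n = Suc a" "m = Suc b" by (metis not0_implies_Suc)
        have "a + k*b = M'" using nm(1) ab False unfolding M'_def by simp
        then have "a \<le> M'" by simp
        with nm(2) ab have "b > D" by (auto simp: image_iff)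
        then have "b > degree (H$a)" using D[OF \<open>a \<le> M'\<close>] by simp
        then have "bcoeff H a b = 0" by (simp add: bcoeff_def coeff_eq_0)
        then show ?thesis using ab by (simp add: bcoeff_Wsh)
      qed (auto simp: bcoeff_Wsh)
    qed simp
    also have "\<dots> = (\<Sum>(n,m)\<in>{..M'}\<times>{..D}. if n + k*m = M' then bcoeff H n m else 0)"
      using False by (subst sum.reindex) (auto simp: inj_on_def bcoeff_Wsh M'_def intro!: sum.cong)
    also have "\<dots> = subst_zk k H $ M'"
      by (simp add: subst_zk_D[of M' H D, OF D] sum.cartesian_product)
    finally show ?thesis using False by (simp add: fps_X_power_mult_nth M'_def del: power_Suc)
  qed
qed

lemma coeff_subst_zt: "coeff (subst_zt G $ Q) m = (if m \<le> Q then bcoeff G (Q-m) m else 0)"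
proof -
  have "coeff (subst_zt G $ Q) m = (\<Sum>n\<le>Q. if n = Q - m \<and> m \<le> Q then bcoeff G (Q-m) m else 0)"
    unfolding subst_zt_def fps_nth_Abs_fps coeff_sum
    by (rule sum.cong) (auto simp: coeff_monom)
  also have "\<dots> = (if m \<le> Q then bcoeff G (Q-m) m else 0)"
    by (cases "m \<le> Q") (simp_all add: sum.delta')
  finally show ?thesis .
qed

lemma subst_zk_subst_zt:
  fixes G :: "'a::comm_ring_1 bivar"
  shows "subst_zk k (subst_zt G) = subst_zk (Suc k) G"
proof (rule fps_ext)
  fix M
  obtain D where D: "\<And>n. n \<le> M \<Longrightarrow> degree (G$n) \<le> D"
    using deg_bound2[of M G G] by blast
  let ?S = "(\<lambda>(n,m). (n+m, m)) ` ({..M}\<times>{..D})"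
  have "subst_zk k (subst_zt G) $ M = (\<Sum>(n,m)\<in>?S. if n + k*m = M then bcoeff (subst_zt G) n m else 0)"
  proof (rule subst_zk_S)
    fix Q m assume nm: "Q + k*m = M" "(Q,m) \<notin> ?S"
    show "bcoeff (subst_zt G) Q m = 0"
    proof (cases "m \<le> Q")
      case True
      define a where "a = Q - m"
      have "a \<le> M" using nm(1) True unfolding a_def by simp
      have "(Q,m) = (\<lambda>(n,m). (n+m, m)) (a, m)" using True unfolding a_def by simp
      then have "(a,m) \<notin> {..M}\<times>{..D}" using nm(2) by (intro notI) (simp add: rev_image_eqI)
      with \<open>a \<le> M\<close> have "m > D" by auto
      then have "m > degree (G$a)" using D[OF \<open>a \<le> M\<close>] by simp
      then show ?thesis using True by (simp add: bcoeff_def coeff_subst_zt a_def coeff_eq_0)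
    qed (simp add: bcoeff_def coeff_subst_zt)
  qed simp
  also have "\<dots> = (\<Sum>(n,m)\<in>{..M}\<times>{..D}. if n + Suc k*m = M then bcoeff G n m else 0)"
    by (subst sum.reindex) (auto simp: inj_on_def bcoeff_def coeff_subst_zt add.assoc intro!: sum.cong)
  also have "\<dots> = subst_zk (Suc k) G $ M"
    by (simp add: subst_zk_D[of M G D, OF D] sum.cartesian_product)
  finally show "subst_zk k (subst_zt G) $ M = subst_zk (Suc k) G $ M" .
qed

lemma geom_eq: "geom_zt - Wsh geom_zt = (1 :: 'a::comm_ring_1 bivar)"
proof (rule fps_ext)
  fix n show "(geom_zt - Wsh geom_zt) $ n = (1 :: 'a bivar) $ n"
    by (cases n) (simp_all add: Wsh_nth geom_zt_def monom_Suc)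
qed

lemma opE_eq: "opE G = (const_t (eval_t 1 G) - Wsh (subst_zt G)) + Wsh (opE G)"
proof -
  define A where "A = const_t (eval_t 1 G) - Wsh (subst_zt G)"
  have Y: "opE G = A * geom_zt" unfolding opE_def A_def Wsh_def by simp
  have "A * geom_zt - Wsh (A * geom_zt) = A * (geom_zt - Wsh geom_zt)"
    unfolding Wsh_def by (simp add: algebra_simps)
  then have "opE G - Wsh (opE G) = A * (geom_zt - Wsh geom_zt)" using Y by simp
  also have "\<dots> = A" by (simp add: geom_eq)
  finally have "opE G - Wsh (opE G) = A" .
  then show ?thesis unfolding A_def by (simp add: algebra_simps)
qed

lemma eval_t0_Wsh: "eval_t 0 (Wsh H) = 0"
  by (rule fps_ext) (simp add: eval_t_def Wsh_nth)

lemma E_nice: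
  fixes G :: "'a::field bivar"
  assumes "G $ 0 = 0" "nice G"
  shows "very_nice (opE G) \<and> opE G $ 0 = 0"
proof (intro conjI)
  have r1: "rational_fps (eval_t 1 G)" using assms(2) by (simp add: nice_def eval_t1_subst0)
  have e0: "eval_t 0 (opE G) = eval_t 1 G"
    apply (subst opE_eq)
    by (simp add: eval_t_add eval_t_diff eval_t0_Wsh) (rule fps_ext, simp add: eval_t_def)
  have "nice (opE G)" unfolding nice_def
  proof
    fix k
    let ?Y = "subst_zk k (opE G)"
    have "?Y = eval_t 1 G - fps_X^Suc k * subst_zk (Suc k) G + fps_X^Suc k * ?Y"
      by (subst opE_eq) (simp add: subst_zk_add subst_zk_diff subst_zk_Wsh subst_zk_const_t subst_zk_subst_zt)
    then have "(1 - fps_X^Suc k) * ?Y = eval_t 1 G - fps_X^Suc k * subst_zk (Suc k) G"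
      by (simp add: algebra_simps)
    moreover have "rational_fps (eval_t 1 G - fps_X^Suc k * subst_zk (Suc k) G)"
      using assms(2) r1 by (intro rat_diff rat_Xpow) (auto simp: nice_def)
    ultimately show "rational_fps ?Y" using rat_cancel_X by metis
  qed
  then show "very_nice (opE G)" using e0 r1 by (simp add: very_nice_def)
  show "opE G $ 0 = 0"
    by (subst opE_eq) (simp add: Wsh_nth eval_t_def assms(1))
qed

lemma inner_mod:
  assumes "n \<le> Q" "0 < m"
  shows "(\<Sum>i\<le>Q. \<Sum>j<m. if n + m*i + j = Q then monom c j else 0) = monom c ((Q-n) mod m)"
proof -
  define i0 where "i0 = (Q-n) div m"
  define j0 where "j0 = (Q-n) mod m"
  have j0: "j0 < m" using assms(2) unfolding j0_def by simp
  have i0: "i0 \<le> Q" unfolding i0_def by (meson div_le_dividend diff_le_self order_trans)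
  have key: "n + m*i + j = Q \<longleftrightarrow> i = i0 \<and> j = j0" if "j < m" for i j
  proof
    assume h: "n + m*i + j = Q"
    then have "Q - n = m*i + j" by simp
    then show "i = i0 \<and> j = j0" unfolding i0_def j0_def using that by simp
  next
    assume "i = i0 \<and> j = j0"
    then show "n + m*i + j = Q" unfolding i0_def j0_def using assms(1)
      using mult_div_mod_eq[of m "Q-n"] by simp
  qed
  have "(\<Sum>i\<le>Q. \<Sum>j<m. if n + m*i + j = Q then monom c j else 0) =
        (\<Sum>i\<le>Q. \<Sum>j<m. if i = i0 then (if j = j0 then monom c j else 0) else 0)"
    by (intro sum.cong refl) (simp add: key)
  also have "\<dots> = monom c j0" using i0 j0 by (simp add: sum_delta_gen sum.delta')
  finally show ?thesis unfolding j0_def .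
qed

lemma opN_nth:
  fixes G :: "'a::comm_ring_1 bivar"
  assumes D: "\<And>n. n \<le> Q \<Longrightarrow> degree (G$n) \<le> D"
  shows "opN G $ Q = [:bcoeff G Q 0:] + (\<Sum>n\<in>{1..Q}. \<Sum>m\<in>{1..D}. monom (bcoeff G n m) ((Q-n) mod m))"
proof -
  have "opN G $ Q = [:bcoeff G Q 0:] + (\<Sum>n\<in>{1..Q}. \<Sum>m\<in>{1..degree (G$n)}. monom (bcoeff G n m) ((Q-n) mod m))"
    unfolding opN_def fps_nth_Abs_fps
  proof (rule arg_cong[where f="\<lambda>x. _ + x"], rule sum.cong[OF refl])
    fix n assume n: "n \<in> {1..Q}"
    show "(\<Sum>m\<in>{1..degree (G $ n)}. \<Sum>i\<le>Q. \<Sum>j<m. if n + m * i + j = Q then monom (bcoeff G n m) j else 0) =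
          (\<Sum>m\<in>{1..degree (G$n)}. monom (bcoeff G n m) ((Q-n) mod m))"
      by (rule sum.cong[OF refl]) (use n in \<open>simp add: inner_mod\<close>)
  qed
  also have "\<dots> = [:bcoeff G Q 0:] + (\<Sum>n\<in>{1..Q}. \<Sum>m\<in>{1..D}. monom (bcoeff G n m) ((Q-n) mod m))"
  proof (rule arg_cong[where f="\<lambda>x. _ + x"], rule sum.cong[OF refl])
    fix n assume "n \<in> {1..Q}"
    then have d: "degree (G$n) \<le> D" using D by simp
    show "(\<Sum>m\<in>{1..degree (G$n)}. monom (bcoeff G n m) ((Q-n) mod m)) = (\<Sum>m\<in>{1..D}. monom (bcoeff G n m) ((Q-n) mod m))"
      by (rule sum.mono_neutral_left) (use d in \<open>auto simp: bcoeff_def coeff_eq_0\<close>)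
  qed
  finally show ?thesis .
qed

definition Tc :: "nat \<Rightarrow> nat \<Rightarrow> nat \<Rightarrow> 'a::comm_ring_1" where
  "Tc k m r = (\<Sum>s\<le>r. if s + k*(s mod m) = r then 1 else 0)"

lemma Tc_rec:
  assumes "0 < m"
  shows "(Tc k m r :: 'a::comm_ring_1) = (if m \<le> r then Tc k m (r-m) else 0) + (\<Sum>j<m. if r = Suc k * j then 1 else 0)"
proof -
  define g :: "nat \<Rightarrow> 'a" where "g = (\<lambda>s. if s + k*(s mod m) = r then 1 else 0)"
  define A where "A = {s. s \<le> r \<and> s < m}"
  define B where "B = {s. s \<le> r \<and> m \<le> s}"
  have AB: "{..r} = A \<union> B" "A \<inter> B = {}" "finite A" "finite B" unfolding A_def B_def by auto
  have "Tc k m r = sum g A + sum g B" unfolding Tc_def g_def[symmetric] AB(1)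
    by (rule sum.union_disjoint) (use AB in auto)
  moreover have "sum g B = (if m \<le> r then Tc k m (r-m) else 0)"
  proof (cases "m \<le> r")
    case True
    have "B = (\<lambda>s. m + s) ` {..r-m}" unfolding B_def using True
      apply (auto simp: image_iff)
      subgoal for x by (rule bexI[of _ "x - m"]) auto
      done
    then have "sum g B = (\<Sum>s\<le>r-m. g (m + s))" by (simp add: sum.reindex)
    also have "\<dots> = Tc k m (r-m)" unfolding Tc_def g_def using True
      by (intro sum.cong refl) auto
    finally show ?thesis using True by simp
  next
    case False
    then have "B = {}" unfolding B_def by auto
    then show ?thesis using False by simp
  qed
  moreover have "sum g A = (\<Sum>j<m. if r = Suc k * j then 1 else 0)"
  proof (rule sum.mono_neutral_cong_left)
    show "A \<subseteq> {..<m}" unfolding A_def by auto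
    show "\<forall>i\<in>{..<m} - A. (if r = Suc k * i then 1 else 0 :: 'a) = 0"
      unfolding A_def by auto
    show "\<And>x. x \<in> A \<Longrightarrow> g x = (if r = Suc k * x then 1 else 0)"
      unfolding A_def g_def by auto
  qed simp
  ultimately show ?thesis by simp
qed

definition Tf :: "nat \<Rightarrow> nat \<Rightarrow> 'a::comm_ring_1 fps" where
  "Tf k m = Abs_fps (Tc k m)"

lemma Tf_mul:
  assumes "0 < m"
  shows "Tf k m * (1 - fps_X^m) = (\<Sum>j<m. (fps_X^Suc k)^j :: 'a::comm_ring_1 fps)"
proof (rule fps_ext)
  fix r
  have "(Tf k m * (1 - fps_X^m)) $ r = (Tf k m - fps_X^m * Tf k m) $ r"
    by (simp add: algebra_simps)
  also have "\<dots> = Tc k m r - (if r < m then 0 else Tc k m (r - m))"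
    by (simp add: fps_X_power_mult_nth Tf_def)
  also have "\<dots> = (\<Sum>j<m. if r = Suc k * j then 1 else 0)"
    using Tc_rec[OF assms, of k r] by auto
  also have "\<dots> = (\<Sum>j<m. (fps_X^Suc k)^j :: 'a fps) $ r"
    by (simp add: fps_sum_nth power_mult[symmetric] fps_X_power_nth del: power_Suc)
  finally show "(Tf k m * (1 - fps_X^m)) $ r = (\<Sum>j<m. (fps_X^Suc k)^j :: 'a fps) $ r" .
qed

lemma Tf_main:
  assumes "0 < m"
  shows "(1 - fps_X^Suc k) * Tf k m = (\<Sum>i<Suc k. (fps_X^m)^i :: 'a::field fps)"
proof -
  have nz: "(1 - fps_X^m :: 'a fps) \<noteq> 0"
  proof
    assume h: "(1 - fps_X^m :: 'a fps) = 0"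
    have "(1 - fps_X^m :: 'a fps) $ 0 = 1" using assms by (simp add: fps_X_power_nth)
    then show False unfolding h by simp
  qed
  have "((1 - fps_X^Suc k) * Tf k m) * (1 - fps_X^m) = (1 - fps_X^Suc k) * (\<Sum>j<m. (fps_X^Suc k)^j :: 'a fps)"
    using Tf_mul[OF assms, of k] by (simp add: mult.assoc)
  also have "\<dots> = 1 - (fps_X^Suc k)^m" by (simp add: one_diff_power_eq del: power_Suc)
  also have "\<dots> = 1 - (fps_X^m)^Suc k" by (simp add: power_mult[symmetric] mult.commute del: power_Suc)
  also have "\<dots> = (\<Sum>i<Suc k. (fps_X^m)^i :: 'a fps) * (1 - fps_X^m)"
    by (simp add: one_diff_power_eq mult.commute del: power_Suc)
  finally show ?thesis using nz by simp
qed

lemma Tc_main: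
  assumes "0 < m"
  shows "(Tc k m r :: 'a::field) - (if r < Suc k then 0 else Tc k m (r - Suc k)) = (\<Sum>i<Suc k. if r = m*i then 1 else 0)"
proof -
  have "((1 - fps_X^Suc k) * Tf k m) $ r = (\<Sum>i<Suc k. (fps_X^m)^i :: 'a fps) $ r"
    using arg_cong[where f="\<lambda>f. f $ r", OF Tf_main[OF assms, of k]] .
  moreover have "((1 - fps_X^Suc k) * Tf k m) $ r = (Tf k m - fps_X^Suc k * Tf k m :: 'a fps) $ r"
    by (simp add: algebra_simps del: power_Suc)
  ultimately show ?thesis
    by (simp add: fps_X_power_mult_nth Tf_def fps_sum_nth power_mult[symmetric] fps_X_power_nth del: power_Suc)
qed

lemma tri_swap:
  fixes M :: nat and f :: "nat \<Rightarrow> nat \<Rightarrow> 'a::comm_monoid_add"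
  shows "(\<Sum>Q\<le>M. \<Sum>n\<in>{1..Q}. f Q n) = (\<Sum>n\<in>{1..M}. \<Sum>s\<le>M-n. f (n+s) n :: 'a::comm_monoid_add)"
proof -
  have "(\<Sum>Q\<le>M. \<Sum>n\<in>{1..Q}. f Q n) = sum (\<lambda>(Q,n). f Q n) (SIGMA Q:{..M}. {1..Q})"
    by (rule sum.Sigma) auto
  also have "\<dots> = sum (\<lambda>(n,s). f (n+s) n) (SIGMA n:{1..M}. {..M-n})"
    by (rule sum.reindex_bij_witness[where i="\<lambda>(n,s). (n+s, n)" and j="\<lambda>(Q,n). (n, Q-n)"]) auto
  also have "\<dots> = (\<Sum>n\<in>{1..M}. \<Sum>s\<le>M-n. f (n+s) n)"
    by (rule sum.Sigma[symmetric]) auto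
  finally show ?thesis .
qed

lemma if_sum_zero: "(if P then sum f A else 0) = (\<Sum>x\<in>A. if P then f x else (0::'a::comm_monoid_add))"
  by simp

lemma coeff_opN:
  fixes G :: "'a::comm_ring_1 bivar"
  assumes D: "\<And>n. n \<le> Q \<Longrightarrow> degree (G$n) \<le> D"
  shows "coeff (opN G $ Q) l = (if l = 0 then bcoeff G Q 0 else 0) +
     (\<Sum>n\<in>{1..Q}. \<Sum>m\<in>{1..D}. if (Q-n) mod m = l then bcoeff G n m else 0)"
  by (simp add: opN_nth[OF D] coeff_sum coeff_monom coeff_pCons split: nat.split)

lemma subst_zk_opN:
  fixes G :: "'a::comm_ring_1 bivar"
  assumes D: "\<And>n. n \<le> M \<Longrightarrow> degree (G$n) \<le> D"
  shows "subst_zk k (opN G) $ M = bcoeff G M 0 + (\<Sum>n\<in>{1..M}. \<Sum>m\<in>{1..D}. bcoeff G n m * Tc k m (M-n))"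
proof -
  define a where "a = bcoeff G"
  have "subst_zk k (opN G) $ M = (\<Sum>(Q,l)\<in>{..M}\<times>{..M}. if Q + k*l = M then bcoeff (opN G) Q l else 0)"
  proof (rule subst_zk_S)
    fix Q l assume h: "Q + k*l = M" "(Q,l) \<notin> {..M}\<times>{..M}"
    then have QM: "Q \<le> M" and lM: "l > M" by auto
    have D': "\<And>n. n \<le> Q \<Longrightarrow> degree (G$n) \<le> D" using D QM by simp
    have "\<And>n m. n \<in> {1..Q} \<Longrightarrow> (Q-n) mod m \<noteq> l"
    proof -
      fix n m assume "n \<in> {1..Q}"
      have "(Q-n) mod m \<le> Q - n" by (rule mod_less_eq_dividend)
      then show "(Q-n) mod m \<noteq> l" using QM lM by linarith
    qed
    then show "bcoeff (opN G) Q l = 0" using lM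
      by (simp add: bcoeff_def coeff_opN[OF D'])
  qed simp
  also have "\<dots> = (\<Sum>Q\<le>M. \<Sum>l\<le>M. if Q + k*l = M then coeff (opN G $ Q) l else 0)"
    unfolding bcoeff_def by (simp add: sum.cartesian_product)
  also have "\<dots> = (\<Sum>Q\<le>M. \<Sum>l\<le>M. if Q + k*l = M then (if l = 0 then a Q 0 else 0) else 0)
     + (\<Sum>Q\<le>M. \<Sum>l\<le>M. if Q + k*l = M then (\<Sum>n\<in>{1..Q}. \<Sum>m\<in>{1..D}. if (Q-n) mod m = l then a n m else 0) else 0)"
    unfolding sum.distrib[symmetric]
  proof (intro sum.cong refl)
    fix Q l assume "Q \<in> {..M}"
    then have D': "\<And>n. n \<le> Q \<Longrightarrow> degree (G$n) \<le> D" using D by simp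
    show "(if Q + k*l = M then coeff (opN G $ Q) l else 0) =
      (if Q + k*l = M then (if l = 0 then a Q 0 else 0) else 0) +
      (if Q + k*l = M then (\<Sum>n\<in>{1..Q}. \<Sum>m\<in>{1..D}. if (Q-n) mod m = l then a n m else 0) else 0)"
      unfolding a_def by (simp add: coeff_opN[OF D'])
  qed
  also have "(\<Sum>Q\<le>M. \<Sum>l\<le>M. if Q + k*l = M then (if l = 0 then a Q 0 else 0) else 0) = a M 0"
  proof -
    have "(\<Sum>Q\<le>M. \<Sum>l\<le>M. if Q + k*l = M then (if l = 0 then a Q 0 else 0) else 0) =
          (\<Sum>Q\<le>M. \<Sum>l\<le>M. if l = 0 then (if Q = M then a Q 0 else 0) else 0)"
      by (intro sum.cong refl) auto
    also have "\<dots> = a M 0" by (simp add: sum.delta)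
    finally show ?thesis .
  qed
  also have "(\<Sum>Q\<le>M. \<Sum>l\<le>M. if Q + k*l = M then (\<Sum>n\<in>{1..Q}. \<Sum>m\<in>{1..D}. if (Q-n) mod m = l then a n m else 0) else 0)
      = (\<Sum>Q\<le>M. \<Sum>n\<in>{1..Q}. \<Sum>m\<in>{1..D}. if Q + k*((Q-n) mod m) = M then a n m else 0)"
  proof (rule sum.cong[OF refl])
    fix Q assume QM: "Q \<in> {..M}"
    have "(\<Sum>l\<le>M. if Q + k*l = M then (\<Sum>n\<in>{1..Q}. \<Sum>m\<in>{1..D}. if (Q-n) mod m = l then a n m else 0) else 0)
        = (\<Sum>l\<le>M. \<Sum>n\<in>{1..Q}. \<Sum>m\<in>{1..D}. if Q + k*l = M \<and> (Q-n) mod m = l then a n m else 0)"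
      unfolding if_sum_zero by (intro sum.cong refl) auto
    also have "\<dots> = (\<Sum>n\<in>{1..Q}. \<Sum>l\<le>M. \<Sum>m\<in>{1..D}. if Q + k*l = M \<and> (Q-n) mod m = l then a n m else 0)"
      by (rule sum.swap)
    also have "\<dots> = (\<Sum>n\<in>{1..Q}. \<Sum>m\<in>{1..D}. \<Sum>l\<le>M. if Q + k*l = M \<and> (Q-n) mod m = l then a n m else 0)"
      by (rule sum.cong[OF refl], rule sum.swap)
    also have "\<dots> = (\<Sum>n\<in>{1..Q}. \<Sum>m\<in>{1..D}. if Q + k*((Q-n) mod m) = M then a n m else 0)"
    proof (intro sum.cong refl)
      fix n m assume n: "n \<in> {1..Q}"
      have le: "(Q-n) mod m \<le> M" using QM mod_less_eq_dividend[of "Q-n" m] by (simp del: mod_less_eq_dividend)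
      have "(\<Sum>l\<le>M. if Q + k*l = M \<and> (Q-n) mod m = l then a n m else 0) =
            (\<Sum>l\<le>M. if (Q-n) mod m = l then (if Q + k*((Q-n) mod m) = M then a n m else 0) else 0)"
        by (intro sum.cong refl) auto
      also have "\<dots> = (if Q + k*((Q-n) mod m) = M then a n m else 0)"
        using le by (simp add: sum.delta)
      finally show "(\<Sum>l\<le>M. if Q + k*l = M \<and> (Q-n) mod m = l then a n m else 0) = (if Q + k*((Q-n) mod m) = M then a n m else 0)" .
    qed
    finally show "(\<Sum>l\<le>M. if Q + k*l = M then (\<Sum>n\<in>{1..Q}. \<Sum>m\<in>{1..D}. if (Q-n) mod m = l then a n m else 0) else 0)
      = (\<Sum>n\<in>{1..Q}. \<Sum>m\<in>{1..D}. if Q + k*((Q-n) mod m) = M then a n m else 0)" .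
  qed
  also have "\<dots> = (\<Sum>n\<in>{1..M}. \<Sum>s\<le>M-n. \<Sum>m\<in>{1..D}. if n + s + k*((n + s - n) mod m) = M then a n m else 0)"
    by (rule tri_swap)
  also have "\<dots> = (\<Sum>n\<in>{1..M}. \<Sum>m\<in>{1..D}. a n m * Tc k m (M-n))"
  proof (rule sum.cong[OF refl])
    fix n assume n: "n \<in> {1..M}"
    have "(\<Sum>s\<le>M-n. \<Sum>m\<in>{1..D}. if n + s + k*((n + s - n) mod m) = M then a n m else 0)
       = (\<Sum>m\<in>{1..D}. \<Sum>s\<le>M-n. if n + s + k*((n + s - n) mod m) = M then a n m else 0)"
      by (rule sum.swap)
    also have "\<dots> = (\<Sum>m\<in>{1..D}. a n m * Tc k m (M-n))"
    proof (rule sum.cong[OF refl])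
      fix m
      have "a n m * Tc k m (M-n) = (\<Sum>s\<le>M-n. if s + k*(s mod m) = M - n then a n m else 0)"
        unfolding Tc_def sum_distrib_left by (intro sum.cong refl) auto
      also have "\<dots> = (\<Sum>s\<le>M-n. if n + s + k*((n + s - n) mod m) = M then a n m else 0)"
        using n by (intro sum.cong refl) auto
      finally show "(\<Sum>s\<le>M-n. if n + s + k*((n + s - n) mod m) = M then a n m else 0) = a n m * Tc k m (M-n)" by simp
    qed
    finally show "(\<Sum>s\<le>M-n. \<Sum>m\<in>{1..D}. if n + s + k*((n + s - n) mod m) = M then a n m else 0) =
       (\<Sum>m\<in>{1..D}. a n m * Tc k m (M-n))" .
  qed
  finally show ?thesis unfolding a_def .
qed

lemma subst_zk_minus0:
  fixes G :: "'a::comm_ring_1 bivar"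
  assumes G0: "G $ 0 = 0" and D: "\<And>n. n \<le> M \<Longrightarrow> degree (G$n) \<le> D"
  shows "subst_zk i G $ M - bcoeff G M 0 = (\<Sum>n\<in>{1..M}. \<Sum>m\<in>{1..D}. if n + i*m = M then bcoeff G n m else 0)"
proof -
  have i0: "{..M} = insert 0 {1..M}" "{..D} = insert 0 {1..D}" by auto
  have a0: "bcoeff G 0 m = 0" for m using G0 by (simp add: bcoeff_def)
  have "subst_zk i G $ M = (\<Sum>n\<le>M. \<Sum>m\<le>D. if n + i*m = M then bcoeff G n m else 0)"
    by (rule subst_zk_D[OF D])
  also have "\<dots> = (\<Sum>n\<in>{1..M}. (if n = M then bcoeff G n 0 else 0) + (\<Sum>m\<in>{1..D}. if n + i*m = M then bcoeff G n m else 0))"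
    unfolding i0 by (simp add: a0 cong: if_cong)
  also have "\<dots> = bcoeff G M 0 + (\<Sum>n\<in>{1..M}. \<Sum>m\<in>{1..D}. if n + i*m = M then bcoeff G n m else 0)"
    using a0[of 0] by (cases M) (simp_all add: sum.distrib a0)
  finally show ?thesis by simp
qed

lemma N_nice:
  fixes G :: "'a::field bivar"
  assumes G0: "G $ 0 = 0" and vn: "very_nice G"
  shows "nice (opN G) \<and> opN G $ 0 = 0"
proof
  show "opN G $ 0 = 0"
    using opN_nth[of 0 G "degree (G$0)"] G0 by (simp add: bcoeff_def)
  have e0: "rational_fps (eval_t 0 G)" and ni: "\<And>i. rational_fps (subst_zk i G)"
    using vn by (auto simp: very_nice_def nice_def)
  show "nice (opN G)" unfolding nice_def
  proof
    fix k
    define a where "a = bcoeff G"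
    define Phi where "Phi = subst_zk k (opN G)"
    have ident: "(1 - fps_X^Suc k) * Phi = (1 - fps_X^Suc k) * eval_t 0 G + (\<Sum>i<Suc k. subst_zk i G - eval_t 0 G)"
    proof (rule fps_ext)
      fix M
      obtain D where D: "\<And>n. n \<le> M \<Longrightarrow> degree (G$n) \<le> D"
        using deg_bound2[of M G G] by blast
      have D': "\<And>n. n \<le> M - Suc k \<Longrightarrow> degree (G$n) \<le> D" using D by simp
      define B where "B = (\<lambda>M'. \<Sum>n\<in>{1..M'}. \<Sum>m\<in>{1..D}. a n m * (Tc k m (M'-n) :: 'a))"
      have PhiM: "Phi $ M = a M 0 + B M"
        unfolding Phi_def B_def a_def by (rule subst_zk_opN[OF D])
      have PhiM': "Phi $ (M - Suc k) = a (M - Suc k) 0 + B (M - Suc k)"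
        unfolding Phi_def B_def a_def by (rule subst_zk_opN[OF D'])
      have eM: "eval_t 0 G $ j = a j 0" for j
        by (simp add: eval_t_def a_def bcoeff_def poly_0_coeff_0)
      have L: "((1 - fps_X^Suc k) * f) $ M = f $ M - (if M < Suc k then 0 else f $ (M - Suc k))" for f :: "'a fps"
      proof -
        have "(1 - fps_X^Suc k) * f = f - fps_X^Suc k * f" by (simp add: algebra_simps del: power_Suc)
        then show ?thesis by (simp add: fps_X_power_mult_nth del: power_Suc)
      qed
      have Bsh: "(if M < Suc k then 0 else B (M - Suc k)) =
        (\<Sum>n\<in>{1..M}. \<Sum>m\<in>{1..D}. a n m * (if M - n < Suc k then 0 else Tc k m (M - n - Suc k)))"
      proof (cases "M < Suc k")
        case True
        then show ?thesis by (auto intro!: sum.neutral)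
      next
        case False
        have "B (M - Suc k) = (\<Sum>n\<in>{1..M}. \<Sum>m\<in>{1..D}. a n m * (if M - n < Suc k then 0 else Tc k m (M - n - Suc k)))"
          unfolding B_def
        proof (rule sum.mono_neutral_cong_left)
          show "{1..M - Suc k} \<subseteq> {1..M}" by auto
          show "\<forall>i\<in>{1..M} - {1..M - Suc k}. (\<Sum>m\<in>{1..D}. a i m * (if M - i < Suc k then 0 else Tc k m (M - i - Suc k))) = 0"
            using False by (auto intro!: sum.neutral)
          show "\<And>x. x \<in> {1..M - Suc k} \<Longrightarrow> (\<Sum>m\<in>{1..D}. a x m * Tc k m (M - Suc k - x)) = (\<Sum>m\<in>{1..D}. a x m * (if M - x < Suc k then 0 else Tc k m (M - x - Suc k)))"
            using False by (intro sum.cong refl) (auto simp: diff_commute add.commute)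
        qed simp
        then show ?thesis using False by simp
      qed
      have "B M - (if M < Suc k then 0 else B (M - Suc k)) =
         (\<Sum>n\<in>{1..M}. \<Sum>m\<in>{1..D}. a n m * (Tc k m (M-n) - (if M - n < Suc k then 0 else Tc k m (M - n - Suc k))))"
        by (simp only: Bsh) (simp add: B_def sum_subtractf right_diff_distrib)
      also have "\<dots> = (\<Sum>n\<in>{1..M}. \<Sum>m\<in>{1..D}. \<Sum>i<Suc k. if n + i*m = M then a n m else 0)"
      proof (intro sum.cong refl)
        fix n m assume n: "n \<in> {1..M}" and m: "m \<in> {1..D}"
        have "a n m * (Tc k m (M-n) - (if M - n < Suc k then 0 else Tc k m (M - n - Suc k))) =
              a n m * (\<Sum>i<Suc k. if M - n = m*i then 1 else 0)"
        proof -
          have eq: "Tc k m (M-n) - (if M - n < Suc k then 0 else Tc k m (M - n - Suc k)) = (\<Sum>i<Suc k. if M - n = m*i then 1 else (0::'a))"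
            by (rule Tc_main) (use m in auto)
          show ?thesis by (simp only: eq)
        qed
        also have "\<dots> = (\<Sum>i<Suc k. if n + i*m = M then a n m else 0)"
          unfolding sum_distrib_left using n by (intro sum.cong refl) (auto simp: mult.commute)
        finally show "a n m * (Tc k m (M-n) - (if M - n < Suc k then 0 else Tc k m (M - n - Suc k))) = (\<Sum>i<Suc k. if n + i*m = M then a n m else 0)" .
      qed
      also have "\<dots> = (\<Sum>n\<in>{1..M}. \<Sum>i<Suc k. \<Sum>m\<in>{1..D}. if n + i*m = M then a n m else 0)"
        by (rule sum.cong[OF refl], rule sum.swap)
      also have "\<dots> = (\<Sum>i<Suc k. \<Sum>n\<in>{1..M}. \<Sum>m\<in>{1..D}. if n + i*m = M then a n m else 0)"
        by (rule sum.swap)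
      also have "\<dots> = (\<Sum>i<Suc k. subst_zk i G $ M - eval_t 0 G $ M)"
        unfolding a_def by (rule sum.cong[OF refl]) (simp add: eM[unfolded a_def] subst_zk_minus0[OF G0 D])
      finally have key: "B M - (if M < Suc k then 0 else B (M - Suc k)) = (\<Sum>i<Suc k. subst_zk i G - eval_t 0 G) $ M"
        by (simp add: fps_sum_nth del: power_Suc sum.lessThan_Suc)
      show "((1 - fps_X^Suc k) * Phi) $ M = ((1 - fps_X^Suc k) * eval_t 0 G + (\<Sum>i<Suc k. subst_zk i G - eval_t 0 G)) $ M"
        unfolding fps_add_nth L PhiM PhiM' eM key[symmetric]
        by (cases "M < Suc k") (simp_all add: algebra_simps)
    qed
    have "rational_fps ((1 - fps_X^Suc k) * eval_t 0 G + (\<Sum>i<Suc k. subst_zk i G - eval_t 0 G))"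
      unfolding one_minus_Xpow
      by (intro rat_add rat_poly_mult rat_sum rat_diff e0 ni)
    then have "rational_fps ((1 - fps_X^Suc k) * Phi)" using ident by simp
    then show "rational_fps (subst_zk k (opN G))" unfolding Phi_def by (rule rat_cancel_X)
  qed
qed

lemma no_consec_tl: "no_consecutive_N (x # xs) \<Longrightarrow> no_consecutive_N xs"
  unfolding no_consecutive_N_def
proof (intro allI impI)
  fix i assume h: "\<forall>i. Suc i < length (x # xs) \<longrightarrow> \<not> ((x # xs) ! i = N \<and> (x # xs) ! Suc i = N)"
    and i: "Suc i < length xs"
  show "\<not> (xs ! i = N \<and> xs ! Suc i = N)" using h[rule_format, of "Suc i"] i by simp
qed

lemma no_consec_hd: "no_consecutive_N (N # y # xs) \<Longrightarrow> y \<noteq> N"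
  unfolding no_consecutive_N_def by (metis length_Cons nth_Cons_0 nth_Cons_Suc zero_less_Suc Suc_less_eq)

lemma main_ind:
  fixes F :: "'a::field bivar"
  shows "F $ 0 = 0 \<Longrightarrow> nice F \<Longrightarrow> (\<Theta> \<noteq> [] \<Longrightarrow> hd \<Theta> = N \<Longrightarrow> very_nice F) \<Longrightarrow> no_consecutive_N \<Theta>
    \<Longrightarrow> nice (apply_ops \<Theta> F)"
proof (induction \<Theta> arbitrary: F)
  case Nil
  then show ?case by (simp add: apply_ops_def)
next
  case (Cons \<theta> \<Theta>)
  have rec: "apply_ops (\<theta> # \<Theta>) F = apply_ops \<Theta> (apply_op \<theta> F)" by (simp add: apply_ops_def)
  have nc: "no_consecutive_N \<Theta>" using Cons.prems(4) by (rule no_consec_tl)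
  show ?case
  proof (cases \<theta>)
    case E
    have "very_nice (opE F) \<and> opE F $ 0 = 0" using E_nice Cons.prems(1,2) by blast
    then show ?thesis using rec E Cons.IH[of "opE F"] nc by (simp add: very_nice_def)
  next
    case N
    have "very_nice F" using Cons.prems(3) N by simp
    then have h: "nice (opN F) \<and> opN F $ 0 = 0" using N_nice Cons.prems(1) by blast
    have "\<Theta> \<noteq> [] \<Longrightarrow> hd \<Theta> \<noteq> N" using Cons.prems(4) N by (cases \<Theta>) (auto dest: no_consec_hd)
    then show ?thesis using rec N Cons.IH[of "opN F"] nc h by simp
  qed
qed

theorem mainTheorem7:
  fixes F :: "'a::field_char_0 bivar" and \<Theta> :: "op list"
  assumes "F $ 0 = 0"
    and "very_nice F"
    and "no_consecutive_N \<Theta>"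
  shows "rational_fps (eval_t 1 (apply_ops \<Theta> F))"
proof -
  have "nice (apply_ops \<Theta> F)"
    using main_ind[of F \<Theta>] assms by (simp add: very_nice_def)
  then show ?thesis by (simp add: nice_def eval_t1_subst0)
qed

end
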